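(* Let $\{w^k\}$, $w^k=(x_1^k,\dots,x_m^k,y^k)$, be generated by the L-GADMM iteration. Then for every $k\ge1$, $$(x_m^k-x_m^{k+1})^\top A_m^\top(y^k-y^{k+1})\ \ge\ \tfrac12\|x_m^k-x_m^{k+1}\|_{P_m}^2-\tfrac12\|x_m^{k-1}-x_m^k\|_{P_m}^2.$$
   Context: Standing setting. Let $m\ge 2$, $\ell$, $n_1,\dots,n_m$ be positive integers. For $i=1,\dots,m$ let $\theta_i:\mathbb{R}^{n_i}\to\mathbb{R}$ be convex, $\mathcal{X}_i\subseteq\mathbb{R}^{n_i}$ nonempty closed convex, $A_i\in\mathbb{R}^{\ell\times n_i}$ of full column rank, and $b\in\mathbb{R}^\ell$. Problem (P): $\min\{\sum_{i=1}^m\theta_i(x_i):\sum_{i=1}^mA_ix_i=b,\ x_i\in\mathcal{X}_i\}$, assumed to have a nonempty solution set. Write $u=(x_1,\dots,x_m)$, $w=(x_1,\dots,x_m,y)$ with $y\in\mathbb{R}^\ell$, $\theta(u)=\sum_i\theta_i(x_i)$, $F(w)=(-A_1^\top y,\dots,-A_m^\top y,\ \sum_iA_ix_i-b)$, $\mathcal{W}=\mathcal{X}_1\times\cdots\times\mathcal{X}_m\times\mathbb{R}^\ell$, and $\mathcal{W}^*=\{w^*\in\mathcal{W}:\theta(u)-\theta(u^* )+(w-w^* )^\top F(w^* )\ge0\ \forall w\in\mathcal{W}\}$ (nonempty). For symmetric $G$, $\|v\|_G^2:=v^\top Gv$; $\|\cdot\|$ is the Euclidean norm. Vectors are partitioned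 as $w=(R,x_m,y)$ with $R=(x_1,\dots,x_{m-1})$. Parameters: $\rho>0$, $\gamma\in(0,2)$, symmetric positive definite $P_i\in\mathbb{R}^{n_i\times n_i}$ ($i=1,\dots,m$) such that $G_1\succ0$, where $G_1$ is the symmetric block matrix with diagonal blocks $P_1,\dots,P_{m-1}$ and $(i,j)$ block $-\rho A_i^\top A_j$ for $i\ne j$, $1\le i,j\le m-1$. Matrices (w.r.t. the partition $(R,x_m,y)$): $Q=\begin{pmatrix}G_1&0&0\\0&\rho A_m^\top A_m+P_m&(1-\gamma)A_m^\top\\0&-A_m&\frac1\rho I_\ell\end{pmatrix}$, $M=\begin{pmatrix}I&0&0\\0&I_{n_m}&0\\0&-\rho A_m&\gamma I_\ell\end{pmatrix}$, $H=\begin{pmatrix}G_1&0&0\\0&P_m+\frac\rho\gamma A_m^\top A_m&\frac{1-\gamma}\gamma A_m^\top\\0&\frac{1-\gamma}\gamma A_m&\frac1{\gamma\rho}I_\ell\end{pmatrix}$, $N=Q^\top+Q-M^\top HM$. L-GADMM iteration: from an arbitrary $w^0=(x_1^0,\dots,x_m^0,y^0)\in\mathcal{W}$, for $k=0,1,2,\dots$: $x_j^{k+1}=\arg\min_{x_j\in\mathcal{X}_j}\{\theta_j(x_j)+\frac\rho2\|A_jx_j+\sum_{i=1,i\ne j}^mA_ix_i^k-b-\frac{y^k}\rho\|^2+\frac12\|x_j-x_j^k\|_{P_j}^2\}$ for $j=1,\dots,m-1$; $x_m^{k+1}=\arg\min_{x_m\in\mathcal{X}_m}\{\theta_m(x_m)+\frac\rho2\|\gamma\sum_{i=1}^{m-1}A_ix_i^{k+1}+(1-\gamma)(b-A_mx_m^k)+A_mx_m-b-\frac{y^k}\rho\|^2+\frac12\|x_m-x_m^k\|_{P_m}^2\}$;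 $y^{k+1}=y^k-\rho\big(\gamma\sum_{i=1}^{m-1}A_ix_i^{k+1}+(1-\gamma)(b-A_mx_m^k)+A_mx_m^{k+1}-b\big)$. Auxiliary sequence: $\bar w^k=(\bar x_1^k,\dots,\bar x_m^k,\bar y^k)$ with $\bar x_i^k=x_i^{k+1}$ ($i=1,\dots,m$) and $\bar y^k=y^k-\rho(\sum_{i=1}^{m-1}A_ix_i^{k+1}+A_mx_m^k-b)$; $\bar u^k=(\bar x_1^k,\dots,\bar x_m^k)$, $R^k=(x_1^k,\dots,x_{m-1}^k)$, $\bar R^k=(\bar x_1^k,\dots,\bar x_{m-1}^k)$. *)

theory Defs
  imports Complex_Main
begin

text \<open>Vectors of R^n are represented as functions nat => real that vanish
  outside the index range {0..<n}; an l x n matrix is a function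
  nat => nat => real, entry (r,c) for r < l, c < n.\<close>

definition rvec :: "nat \<Rightarrow> (nat \<Rightarrow> real) set" where
  "rvec n = {v. \<forall>j\<ge>n. v j = 0}"

definition vsub :: "(nat \<Rightarrow> real) \<Rightarrow> (nat \<Rightarrow> real) \<Rightarrow> (nat \<Rightarrow> real)" where
  "vsub u v = (\<lambda>j. u j - v j)"

definition dotp :: "nat \<Rightarrow> (nat \<Rightarrow> real) \<Rightarrow> (nat \<Rightarrow> real) \<Rightarrow> real" where
  "dotp n u v = (\<Sum>j<n. u j * v j)"

definition nsq :: "nat \<Rightarrow> (nat \<Rightarrow> real) \<Rightarrow> real" where
  "nsq n v = dotp n v v"

definition mv :: "(nat \<Rightarrow> nat \<Rightarrow> real) \<Rightarrow> nat \<Rightarrow> (nat \<Rightarrow> real) \<Rightarrow> (nat \<Rightarrow> real)" where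
  "mv A n x = (\<lambda>r. \<Sum>c<n. A r c * x c)"

definition mtv :: "(nat \<Rightarrow> nat \<Rightarrow> real) \<Rightarrow> nat \<Rightarrow> (nat \<Rightarrow> real) \<Rightarrow> (nat \<Rightarrow> real)" where
  "mtv A l y = (\<lambda>c. \<Sum>r<l. A r c * y r)"

definition qf :: "nat \<Rightarrow> (nat \<Rightarrow> nat \<Rightarrow> real) \<Rightarrow> (nat \<Rightarrow> real) \<Rightarrow> real" where
  "qf n G v = dotp n v (mv G n v)"

definition convex_fun :: "nat \<Rightarrow> ((nat \<Rightarrow> real) \<Rightarrow> real) \<Rightarrow> bool" where
  "convex_fun n f \<longleftrightarrow> (\<forall>x\<in>rvec n. \<forall>y\<in>rvec n. \<forall>t::real. 0 \<le> t \<and> t \<le> 1 \<longrightarrow>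
      f (\<lambda>j. t * x j + (1 - t) * y j) \<le> t * f x + (1 - t) * f y)"

definition convex_vset :: "nat \<Rightarrow> (nat \<Rightarrow> real) set \<Rightarrow> bool" where
  "convex_vset n S \<longleftrightarrow> S \<subseteq> rvec n \<and> (\<forall>x\<in>S. \<forall>y\<in>S. \<forall>t::real. 0 \<le> t \<and> t \<le> 1 \<longrightarrow>
      (\<lambda>j. t * x j + (1 - t) * y j) \<in> S)"

definition closed_vset :: "nat \<Rightarrow> (nat \<Rightarrow> real) set \<Rightarrow> bool" where
  "closed_vset n S \<longleftrightarrow> S \<subseteq> rvec n \<and> (\<forall>s z. (\<forall>k. s k \<in> S) \<and> z \<in> rvec n \<and>
      (\<forall>j<n. (\<lambda>k. s k j) \<longlonglongrightarrow> z j) \<longrightarrow> z \<in> S)"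

definition full_col_rank :: "nat \<Rightarrow> nat \<Rightarrow> (nat \<Rightarrow> nat \<Rightarrow> real) \<Rightarrow> bool" where
  "full_col_rank l n A \<longleftrightarrow> (\<forall>x\<in>rvec n. (\<forall>r<l. mv A n x r = 0) \<longrightarrow> x = (\<lambda>_. 0))"

definition sym_mat :: "nat \<Rightarrow> (nat \<Rightarrow> nat \<Rightarrow> real) \<Rightarrow> bool" where
  "sym_mat n P \<longleftrightarrow> (\<forall>i<n. \<forall>j<n. P i j = P j i)"

definition pos_def :: "nat \<Rightarrow> (nat \<Rightarrow> nat \<Rightarrow> real) \<Rightarrow> bool" where
  "pos_def n P \<longleftrightarrow> sym_mat n P \<and> (\<forall>x\<in>rvec n. x \<noteq> (\<lambda>_. 0) \<longrightarrow> qf n P x > 0)"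

text \<open>G_1 positive definite: the quadratic form of the symmetric block matrix with
  diagonal blocks P_1..P_(m-1) and off-diagonal blocks -rho A_i^T A_j is positive
  on every nonzero R = (x_1,...,x_(m-1)).\<close>
definition G1_pos_def :: "nat \<Rightarrow> nat \<Rightarrow> (nat \<Rightarrow> nat) \<Rightarrow> (nat \<Rightarrow> nat \<Rightarrow> nat \<Rightarrow> real)
    \<Rightarrow> (nat \<Rightarrow> nat \<Rightarrow> nat \<Rightarrow> real) \<Rightarrow> real \<Rightarrow> bool" where
  "G1_pos_def m l n A P \<rho> \<longleftrightarrow>
    (\<forall>R::nat \<Rightarrow> nat \<Rightarrow> real. (\<forall>i\<in>{1..m-1}. R i \<in> rvec (n i)) \<and> (\<exists>i\<in>{1..m-1}. R i \<noteq> (\<lambda>_. 0)) \<longrightarrow>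
      (\<Sum>i\<in>{1..m-1}. qf (n i) (P i) (R i))
      - \<rho> * (\<Sum>i\<in>{1..m-1}. \<Sum>j\<in>{1..m-1}-{i}. dotp l (mv (A i) (n i) (R i)) (mv (A j) (n j) (R j))) > 0)"

end

theory Submission
  imports Defs
begin



lemma mv_add: "mv A n (\<lambda>j. a j + t * b j) = (\<lambda>r. mv A n a r + t * mv A n b r)"
  unfolding mv_def by (auto simp: algebra_simps sum.distrib sum_distrib_left intro!: ext)

lemma dotp_exp: "dotp n (\<lambda>j. a j + t*b j) (\<lambda>j. c j + t*d j)
   = dotp n a c + t*(dotp n a d + dotp n b c) + t^2 * dotp n b d"
  unfolding dotp_def by (simp add: algebra_simps sum.distrib sum_distrib_left power2_eq_square)

lemma dotp_comm: "dotp n a b = dotp n b a"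
  unfolding dotp_def by (simp add: mult.commute)

lemma qf_exp: "qf n P (\<lambda>j. v j + t*w j) = qf n P v + t*(dotp n v (mv P n w) + dotp n w (mv P n v)) + t^2 * qf n P w"
  unfolding qf_def mv_add dotp_exp by simp

lemma nsq_exp: "nsq l (\<lambda>r. a r + t*b r) = nsq l a + t*(2*dotp l a b) + t^2 * nsq l b"
  unfolding nsq_def dotp_exp using dotp_comm[of l b a] by simp

lemma lim0: fixes a c :: real assumes "\<forall>t. 0 < t \<and> t \<le> 1 \<longrightarrow> a + t*c \<ge> 0" shows "a \<ge> 0"
proof (rule ccontr)
  assume "\<not> a \<ge> 0" hence a: "a < 0" by simp
  define t where "t = min 1 (-a/(2*(\<bar>c\<bar>+1)))"
  have "a / (2*(\<bar>c\<bar>+1)) < 0" using a by (intro divide_neg_pos) auto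
  hence t0: "0 < t" "t \<le> 1" by (auto simp: t_def)
  have "t*\<bar>c\<bar> \<le> (-a/(2*(\<bar>c\<bar>+1)))*\<bar>c\<bar>" by (rule mult_right_mono) (auto simp: t_def)
  also have "\<dots> \<le> -a/2" using a by (simp add: field_simps)
  finally have "t*c \<le> -a/2" using t0 by (smt (verit) abs_ge_self mult_left_mono)
  with a assms t0 show False by force
qed

lemma opt:
  fixes f :: "(nat\<Rightarrow>real)\<Rightarrow>real"
  assumes cf: "convex_fun n f" and XS: "convex_vset n S" and xs: "xs \<in> S" and z: "z \<in> S"
  and minp: "\<forall>z\<in>S. f xs + \<rho>/2 * nsq l (\<lambda>r. mv A n xs r + c r) + 1/2*qf n P (vsub xs x0)
       \<le> f z + \<rho>/2 * nsq l (\<lambda>r. mv A n z r + c r) + 1/2*qf n P (vsub z x0)"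
  shows "f z - f xs + \<rho> * dotp l (mv A n (vsub z xs)) (\<lambda>r. mv A n xs r + c r)
     + 1/2*(dotp n (vsub xs x0) (mv P n (vsub z xs)) + dotp n (vsub z xs) (mv P n (vsub xs x0))) \<ge> 0"
proof -
  define w where "w = vsub z xs"
  define a where "a = (\<lambda>r. mv A n xs r + c r)"
  define v where "v = vsub xs x0"
  define D where "D = \<rho> * dotp l (mv A n w) a + 1/2*(dotp n v (mv P n w) + dotp n w (mv P n v))"
  define C where "C = \<rho>/2 * nsq l (mv A n w) + 1/2 * qf n P w"
  have "\<forall>t. 0 < t \<and> t \<le> 1 \<longrightarrow> (f z - f xs + D) + t*C \<ge> 0"
  proof (intro allI impI)
    fix t :: real assume t: "0 < t \<and> t \<le> 1"
    define zt where "zt = (\<lambda>j. t * z j + (1 - t) * xs j)"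
    have ztS: "zt \<in> S" using XS xs z t unfolding convex_vset_def zt_def by auto
    have rv: "xs \<in> rvec n" "z \<in> rvec n" using XS xs z unfolding convex_vset_def by auto
    have fz: "f zt \<le> t * f z + (1-t) * f xs" using cf rv t unfolding convex_fun_def zt_def by auto
    have zte: "zt = (\<lambda>j. xs j + t * w j)" unfolding zt_def w_def vsub_def by (auto simp: algebra_simps)
    have e1: "(\<lambda>r. mv A n zt r + c r) = (\<lambda>r. a r + t * mv A n w r)"
      unfolding zte mv_add a_def by (auto simp: algebra_simps)
    have e2: "vsub zt x0 = (\<lambda>j. v j + t * w j)" unfolding zte v_def vsub_def by (auto simp: algebra_simps)
    have "f xs + \<rho>/2 * nsq l a + 1/2*qf n P v \<le> f zt + \<rho>/2 * nsq l (\<lambda>r. mv A n zt r + c r) + 1/2*qf n P (vsub zt x0)"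
      using minp ztS unfolding a_def v_def by blast
    also have "\<dots> = f zt + \<rho>/2 * nsq l a + 1/2*qf n P v + t * D + t^2 * C"
      unfolding e1 e2 nsq_exp qf_exp D_def C_def using dotp_comm[of l a "mv A n w"] by (simp add: algebra_simps)
    finally have "0 \<le> t * (f z - f xs + D + t * C)" using fz by (simp add: algebra_simps power2_eq_square)
    thus "(f z - f xs + D) + t*C \<ge> 0" using t by (simp add: zero_le_mult_iff)
  qed
  hence "f z - f xs + D \<ge> 0" by (rule lim0)
  thus ?thesis unfolding D_def w_def a_def v_def by simp
qed

lemma dotp_mv_mtv: "dotp l (mv A n w) y = dotp n w (mtv A l y)"
  unfolding dotp_def mv_def mtv_def
  by (simp add: sum_distrib_left sum_distrib_right mult_ac sum.swap[of _ "{..<l}"])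


lemma mv_neg: "mv A n (\<lambda>j. - u j) = (\<lambda>r. - mv A n u r)"
  unfolding mv_def by (auto simp: sum_negf intro!: ext)
lemma dotp_neg1: "dotp n (\<lambda>j. - u j) v = - dotp n u v"
  unfolding dotp_def by (simp add: sum_negf)
lemma dotp_neg2: "dotp n u (\<lambda>j. - v j) = - dotp n u v"
  unfolding dotp_def by (simp add: sum_negf)
lemma dotp_vsub2: "dotp n a (vsub b c) = dotp n a b - dotp n a c"
  unfolding dotp_def vsub_def by (simp add: algebra_simps sum_subtractf)
lemma qf_nonneg: assumes "pos_def n P" "v \<in> rvec n" shows "qf n P v \<ge> 0"
proof (cases "v = (\<lambda>_. 0)")
  case True thus ?thesis by (simp add: qf_def dotp_def)
next
  case False thus ?thesis using assms unfolding pos_def_def by force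
qed

theorem lemma4p4:
  fixes m l :: nat and n :: "nat \<Rightarrow> nat"
    and \<theta> :: "nat \<Rightarrow> (nat \<Rightarrow> real) \<Rightarrow> real"
    and X :: "nat \<Rightarrow> (nat \<Rightarrow> real) set"
    and A P :: "nat \<Rightarrow> nat \<Rightarrow> nat \<Rightarrow> real"
    and b :: "nat \<Rightarrow> real"
    and \<rho> \<gamma> :: real
    and x :: "nat \<Rightarrow> nat \<Rightarrow> nat \<Rightarrow> real"
    and y :: "nat \<Rightarrow> nat \<Rightarrow> real"
    and k :: nat
  assumes m: "m \<ge> 2" and l: "l \<ge> 1" and npos: "\<forall>i\<in>{1..m}. n i \<ge> 1"
    and conv: "\<forall>i\<in>{1..m}. convex_fun (n i) (\<theta> i)"
    and Xne: "\<forall>i\<in>{1..m}. X i \<noteq> {}"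
    and Xcvx: "\<forall>i\<in>{1..m}. convex_vset (n i) (X i)"
    and Xcl: "\<forall>i\<in>{1..m}. closed_vset (n i) (X i)"
    and rank: "\<forall>i\<in>{1..m}. full_col_rank l (n i) (A i)"
    and b: "b \<in> rvec l"
    and solvable: "\<exists>xs. (\<forall>i\<in>{1..m}. xs i \<in> X i) \<and>
        (\<forall>r<l. (\<Sum>i\<in>{1..m}. mv (A i) (n i) (xs i) r) = b r) \<and>
        (\<forall>u. (\<forall>i\<in>{1..m}. u i \<in> X i) \<and> (\<forall>r<l. (\<Sum>i\<in>{1..m}. mv (A i) (n i) (u i) r) = b r)
             \<longrightarrow> (\<Sum>i\<in>{1..m}. \<theta> i (xs i)) \<le> (\<Sum>i\<in>{1..m}. \<theta> i (u i)))"
    and Wstar: "\<exists>xs ys. (\<forall>i\<in>{1..m}. xs i \<in> X i) \<and> ys \<in> rvec l \<and>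
        (\<forall>u v. (\<forall>i\<in>{1..m}. u i \<in> X i) \<and> v \<in> rvec l \<longrightarrow>
           (\<Sum>i\<in>{1..m}. \<theta> i (u i)) - (\<Sum>i\<in>{1..m}. \<theta> i (xs i))
           + (\<Sum>i\<in>{1..m}. dotp (n i) (vsub (u i) (xs i)) (\<lambda>c. - mtv (A i) l ys c))
           + dotp l (vsub v ys) (\<lambda>r. (\<Sum>i\<in>{1..m}. mv (A i) (n i) (xs i) r) - b r) \<ge> 0)"
    and rho: "\<rho> > 0" and gam: "0 < \<gamma>" "\<gamma> < 2"
    and Ppd: "\<forall>i\<in>{1..m}. pos_def (n i) (P i)"
    and G1: "G1_pos_def m l n A P \<rho>"
    and init: "\<forall>i\<in>{1..m}. x 0 i \<in> X i" "y 0 \<in> rvec l"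
    and xstep: "\<forall>j. \<forall>j'\<in>{1..m-1}. x (Suc j) j' \<in> X j' \<and>
        (\<forall>z\<in>X j'.
          \<theta> j' (x (Suc j) j')
            + \<rho> / 2 * nsq l (\<lambda>r. mv (A j') (n j') (x (Suc j) j') r
                 + (\<Sum>i\<in>{1..m}-{j'}. mv (A i) (n i) (x j i) r) - b r - y j r / \<rho>)
            + 1 / 2 * qf (n j') (P j') (vsub (x (Suc j) j') (x j j'))
          \<le> \<theta> j' z
            + \<rho> / 2 * nsq l (\<lambda>r. mv (A j') (n j') z r
                 + (\<Sum>i\<in>{1..m}-{j'}. mv (A i) (n i) (x j i) r) - b r - y j r / \<rho>)
            + 1 / 2 * qf (n j') (P j') (vsub z (x j j')))"
    and xmstep: "\<forall>j. x (Suc j) m \<in> X m \<and>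
        (\<forall>z\<in>X m.
          \<theta> m (x (Suc j) m)
            + \<rho> / 2 * nsq l (\<lambda>r. \<gamma> * (\<Sum>i\<in>{1..m-1}. mv (A i) (n i) (x (Suc j) i) r)
                 + (1 - \<gamma>) * (b r - mv (A m) (n m) (x j m) r)
                 + mv (A m) (n m) (x (Suc j) m) r - b r - y j r / \<rho>)
            + 1 / 2 * qf (n m) (P m) (vsub (x (Suc j) m) (x j m))
          \<le> \<theta> m z
            + \<rho> / 2 * nsq l (\<lambda>r. \<gamma> * (\<Sum>i\<in>{1..m-1}. mv (A i) (n i) (x (Suc j) i) r)
                 + (1 - \<gamma>) * (b r - mv (A m) (n m) (x j m) r)
                 + mv (A m) (n m) z r - b r - y j r / \<rho>)
            + 1 / 2 * qf (n m) (P m) (vsub z (x j m)))"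
    and ystep: "\<forall>j. y (Suc j) \<in> rvec l \<and>
        (\<forall>r<l. y (Suc j) r = y j r - \<rho> * (\<gamma> * (\<Sum>i\<in>{1..m-1}. mv (A i) (n i) (x (Suc j) i) r)
                 + (1 - \<gamma>) * (b r - mv (A m) (n m) (x j m) r)
                 + mv (A m) (n m) (x (Suc j) m) r - b r))"
    and k: "k \<ge> 1"
  shows "dotp (n m) (vsub (x k m) (x (Suc k) m)) (mtv (A m) l (vsub (y k) (y (Suc k))))
     \<ge> 1 / 2 * qf (n m) (P m) (vsub (x k m) (x (Suc k) m))
       - 1 / 2 * qf (n m) (P m) (vsub (x (k - 1) m) (x k m))"
proof -
  define c where "c = (\<lambda>j r. \<gamma> * (\<Sum>i\<in>{1..m-1}. mv (A i) (n i) (x (Suc j) i) r)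
                 + (1 - \<gamma>) * (b r - mv (A m) (n m) (x j m) r) - b r - y j r / \<rho>)"
  have mI: "m \<in> {1..m}" using m by auto
  have cvx: "convex_vset (n m) (X m)" using Xcvx mI by blast
  have cf: "convex_fun (n m) (\<theta> m)" using conv mI by blast
  have pd: "pos_def (n m) (P m)" using Ppd mI by blast
  have minp: "\<forall>z\<in>X m. \<theta> m (x (Suc j) m) + \<rho>/2 * nsq l (\<lambda>r. mv (A m) (n m) (x (Suc j) m) r + c j r) + 1/2*qf (n m) (P m) (vsub (x (Suc j) m) (x j m))
       \<le> \<theta> m z + \<rho>/2 * nsq l (\<lambda>r. mv (A m) (n m) z r + c j r) + 1/2*qf (n m) (P m) (vsub z (x j m))" for j
  proof -
    have e: "(\<lambda>r. \<gamma> * (\<Sum>i\<in>{1..m-1}. mv (A i) (n i) (x (Suc j) i) r)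
                 + (1 - \<gamma>) * (b r - mv (A m) (n m) (x j m) r)
                 + mv (A m) (n m) z r - b r - y j r / \<rho>) = (\<lambda>r. mv (A m) (n m) z r + c j r)" for z
      unfolding c_def by (auto simp: algebra_simps)
    show ?thesis using xmstep[rule_format, of j] unfolding e by blast
  qed
  have yrel: "\<rho> * dotp l u (\<lambda>r. mv (A m) (n m) (x (Suc j) m) r + c j r) = - dotp l u (y (Suc j))" for u j
  proof -
    have "\<rho> * dotp l u (\<lambda>r. mv (A m) (n m) (x (Suc j) m) r + c j r) = (\<Sum>r<l. u r * (\<rho> * (mv (A m) (n m) (x (Suc j) m) r + c j r)))"
      unfolding dotp_def by (simp add: sum_distrib_left mult_ac)
    also have "\<dots> = (\<Sum>r<l. u r * (- y (Suc j) r))"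
    proof (rule sum.cong)
      fix r assume "r \<in> {..<l}"
      hence "y (Suc j) r = y j r - \<rho> * (\<gamma> * (\<Sum>i\<in>{1..m-1}. mv (A i) (n i) (x (Suc j) i) r)
                 + (1 - \<gamma>) * (b r - mv (A m) (n m) (x j m) r)
                 + mv (A m) (n m) (x (Suc j) m) r - b r)" using ystep by auto
      moreover have "\<rho> * (y j r / \<rho>) = y j r" using rho by simp
      ultimately have "\<rho> * (mv (A m) (n m) (x (Suc j) m) r + c j r) = - y (Suc j) r"
        unfolding c_def by (simp add: algebra_simps)
      thus "u r * (\<rho> * (mv (A m) (n m) (x (Suc j) m) r + c j r)) = u r * (- y (Suc j) r)" by simp
    qed simp
    finally show ?thesis unfolding dotp_def by (simp add: sum_negf)
  qed
  have kk: "Suc (k-1) = k" using k by simp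
  have xk: "x k m \<in> X m" using xmstep kk by metis
  have xk1: "x (Suc k) m \<in> X m" using xmstep by blast
  have xkm: "x (k-1) m \<in> X m"
  proof (cases "k - 1")
    case 0 thus ?thesis using init mI by simp
  next
    case (Suc q) thus ?thesis using xmstep by metis
  qed
  note I1 = opt[OF cf cvx xk1 xk minp[of k]]
  note I2 = opt[OF cf cvx xk xk1 minp[of "k-1", unfolded kk]]
  define d where "d = vsub (x k m) (x (Suc k) m)"
  define e where "e = vsub (x (k-1) m) (x k m)"
  have d1: "vsub (x (Suc k) m) (x k m) = (\<lambda>j. - d j)" unfolding d_def vsub_def by auto
  have e1: "vsub (x k m) (x (k-1) m) = (\<lambda>j. - e j)" unfolding e_def vsub_def by auto
  have I1': "\<theta> m (x k m) - \<theta> m (x (Suc k) m) - dotp l (mv (A m) (n m) d) (y (Suc k)) - qf (n m) (P m) d \<ge> 0"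
    using I1 unfolding yrel d1 d_def[symmetric] qf_def by (simp add: mv_neg dotp_neg1 dotp_neg2)
  have I2': "\<theta> m (x (Suc k) m) - \<theta> m (x k m) + dotp l (mv (A m) (n m) d) (y k)
      + 1/2*(dotp (n m) e (mv (P m) (n m) d) + dotp (n m) d (mv (P m) (n m) e)) \<ge> 0"
    using I2 unfolding yrel[of _ "k-1", unfolded kk] d1 e1 by (simp add: mv_neg dotp_neg1 dotp_neg2)
  have rv: "X m \<subseteq> rvec (n m)" using cvx unfolding convex_vset_def by blast
  have de: "(\<lambda>j. d j + (-1) * e j) \<in> rvec (n m)"
    proof -
    have "x k m \<in> rvec (n m)" "x (Suc k) m \<in> rvec (n m)" "x (k-1) m \<in> rvec (n m)" using rv xk xk1 xkm by auto
    thus ?thesis unfolding d_def e_def vsub_def rvec_def by auto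
  qed
  have "qf (n m) (P m) (\<lambda>j. d j + (-1) * e j) \<ge> 0" by (rule qf_nonneg[OF pd de])
  hence cs: "qf (n m) (P m) d - (dotp (n m) d (mv (P m) (n m) e) + dotp (n m) e (mv (P m) (n m) d)) + qf (n m) (P m) e \<ge> 0"
    unfolding qf_exp by simp
  have goal: "dotp (n m) d (mtv (A m) l (vsub (y k) (y (Suc k)))) = dotp l (mv (A m) (n m) d) (y k) - dotp l (mv (A m) (n m) d) (y (Suc k))"
    unfolding dotp_mv_mtv[symmetric] dotp_vsub2 ..
  show ?thesis unfolding d_def[symmetric] e_def[symmetric] goal
    using I1' I2' cs unfolding qf_def by (simp add: algebra_simps)
qed

end
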